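(* Let $\rho$ be a non-integer real number greater than $-1$, and let $\phi\in\zeta^\rho\,\mathcal{O}_{\zeta=0}$. Let $h_n,\dots,h_0,h_{-1},\dots,h_{-m}\in\mathcal{O}_{\zeta=0}$. Then $$\Big[\sum_{k=0}^n\big(\tfrac{\partial}{\partial\zeta}\big)^k\circ h_k+\sum_{k=1}^m\partial^{-k}_{\zeta,0}\circ h_{-k}\Big]\phi=0$$ if and only if $$\Big[\sum_{k=1}^n\big(\tfrac{\partial}{\partial\zeta}\big)^{k-1}\circ h_k+\sum_{k=0}^m\partial^{-k-1}_{\zeta,0}\circ h_{-k}\Big]\phi=0.$$
   Context: $\mathcal{O}_{\zeta=0}$ is the algebra of germs of holomorphic functions at $\zeta=0$, and $\zeta^\rho\,\mathcal{O}_{\zeta=0}$ consists of germs of the form $\zeta^\rho g$ with $g\in\mathcal{O}_{\zeta=0}$ (on a slit neighbourhood of $0$, with a fixed branch of $\zeta^\rho$). Each $h_j$ acts by multiplication. For an integer $k\ge1$, the integral operator is $\partial^{-k}_{\zeta,0}\psi(\zeta)=\frac{1}{\Gamma(k)}\int_0^\zeta(\zeta-\zeta')^{k-1}\psi(\zeta')\,d\zeta'$, integrated along the segment from $0$ to $\zeta$ ($k$-fold repeated integration from $0$). *)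

theory Defs
  imports "HOL-Complex_Analysis.Complex_Analysis"
begin

text \<open>Slit disc: the disc of radius r around 0 with the closed negative real
  axis removed; on it the principal branch of z powr rho is holomorphic.\<close>
definition slit_ball :: "real \<Rightarrow> complex set" where
  "slit_ball r = ball 0 r - {z. Im z = 0 \<and> Re z \<le> 0}"

text \<open>k-fold integration from 0 along the segment [0, z]:
  (1 / Gamma k) times the integral of (z - w)^(k-1) psi(w) dw.\<close>
definition int_from0 :: "nat \<Rightarrow> (complex \<Rightarrow> complex) \<Rightarrow> complex \<Rightarrow> complex" where
  "int_from0 k psi z =
     (1 / Gamma (of_nat k)) * contour_integral (linepath 0 z) (\<lambda>w. (z - w) ^ (k - 1) * psi w)"

definition dz_pow :: "nat \<Rightarrow> (complex \<Rightarrow> complex) \<Rightarrow> complex \<Rightarrow> complex" where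
  "dz_pow k psi = (deriv ^^ k) psi"

definition vanishes_near0 :: "(complex \<Rightarrow> complex) \<Rightarrow> bool" where
  "vanishes_near0 f \<longleftrightarrow> (\<exists>e>0. \<forall>z\<in>slit_ball e. f z = 0)"

end

theory Submission
  imports Defs
begin

lemma antideriv_series:
  fixes \<alpha> :: real and H :: "complex \<Rightarrow> complex" and e :: real
  assumes al: "\<alpha> > -1" and hol: "H holomorphic_on ball 0 e"
  shows "\<exists>K. K holomorphic_on ball 0 e \<and>
           (\<forall>z\<in>ball 0 e. of_real (\<alpha>+1) * K z + z * deriv K z = H z)"
proof -
  define a where "a n = (deriv^^n) H 0 / fact n" for n
  define c where "c n = a n / of_real (\<alpha> + 1 + real n)" for n
  define K where "K z = (\<Sum>n. c n * z^n)" for z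
  have sumsH: "(\<lambda>n. a n * w^n) sums H w" if "w \<in> ball 0 e" for w
    using holomorphic_power_series[OF hol that] by (simp add: a_def)
  have summ: "summable (\<lambda>n. c n * w^n)" if "cmod w < s" "s < e" for w s
  proof -
    have "0 \<le> cmod w" by simp
    with that have "\<bar>s\<bar> < e" by linarith
    then have "of_real s \<in> ball (0::complex) e" by simp
    then have "summable (\<lambda>n. a n * (of_real s)^n)"
      using sumsH sums_summable by blast
    then have s1: "summable (\<lambda>n. norm (a n * w ^ n))"
      by (rule powser_insidea) (use that in auto)
    then have s2: "summable (\<lambda>n. norm (a n * w ^ n) / (\<alpha>+1))"
      by (rule summable_divide)
    show ?thesis
    proof (rule summable_comparison_test'[OF s2])
      fix n :: nat
      have pos: "\<alpha> + 1 + real n \<ge> \<alpha> + 1" "\<alpha> + 1 > 0" using al by auto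
      have nn: "norm (complex_of_real (\<alpha>+1+real n)) = \<alpha>+1+real n"
        by (simp only: norm_of_real) (use pos in simp)
      have "norm (c n * w^n) = norm (a n * w^n) / (\<alpha> + 1 + real n)"
        unfolding c_def norm_mult norm_divide nn by simp
      also have "\<dots> \<le> norm (a n * w^n) / (\<alpha>+1)"
        using pos by (intro divide_left_mono) auto
      finally show "norm (c n * w^n) \<le> norm (a n * w ^ n) / (\<alpha>+1)" .
    qed
  qed
  have der: "\<exists>g'. (K has_field_derivative g') (at z) \<and>
               (\<lambda>n. of_nat n * c n * z ^ (n-1)) sums g'" if z: "z \<in> ball 0 e" for z
  proof -
    define s where "s = (cmod z + e) / 2"
    have zs: "cmod z < s" "s < e" using z by (auto simp: s_def)
    have "summable (\<lambda>n. c n * (of_real s)^n)"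
      proof (rule summ[of _ "(s+e)/2"])
      have "0 \<le> cmod z" by simp
      with zs have "\<bar>s\<bar> = s" by linarith
      with zs show "cmod (complex_of_real s) < (s + e) / 2" "(s + e) / 2 < e" by auto
    qed
    then obtain g g' where gg: "\<forall>u \<in> ball 0 s.
             ((\<lambda>n. c n * (u-0) ^ n) sums g u) \<and> ((\<lambda>n. of_nat n * c n * (u-0) ^ (n-1)) sums g' u) \<and>
              (g has_field_derivative g' u) (at u)"
      using power_series_and_derivative[of c s 0] by (simp add: of_real_power) blast
    have "(K has_field_derivative g' z) (at z)"
    proof (rule has_field_derivative_transform_within_open[of g _ z "ball 0 s"])
      show "(g has_field_derivative g' z) (at z)" using gg zs by auto
      show "z \<in> ball 0 s" using zs by auto
      fix u assume "u \<in> ball (0::complex) s"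
      then show "g u = K u" using gg unfolding K_def by (metis sums_unique diff_zero)
    qed auto
    then show ?thesis using gg zs by auto
  qed
  show ?thesis
  proof (intro exI conjI ballI)
    show "K holomorphic_on ball 0 e"
      unfolding holomorphic_on_open[OF open_ball]
    proof
      fix z :: complex assume z: "z \<in> ball 0 e"
      obtain g' where "(K has_field_derivative g') (at z)" using der[OF z] by blast
      then show "\<exists>f'. (K has_field_derivative f') (at z)" by blast
    qed
    fix z assume z: "z \<in> ball (0::complex) e"
    obtain g' where g': "(K has_field_derivative g') (at z)"
        "(\<lambda>n. of_nat n * c n * z ^ (n-1)) sums g'" using der[OF z] by blast
    have dK: "deriv K z = g'" using g'(1) by (rule DERIV_imp_deriv)
    have "cmod z < (cmod z + e)/2" "(cmod z + e)/2 < e" using z by auto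
    then have "(\<lambda>n. c n * z^n) sums K z" unfolding K_def
      using summ summable_sums by blast
    then have s1: "(\<lambda>n. of_real (\<alpha>+1) * (c n * z^n)) sums (of_real (\<alpha>+1) * K z)"
      by (rule sums_mult)
    have s2: "(\<lambda>n. z * (of_nat n * c n * z ^ (n-1))) sums (z * g')"
      using g'(2) by (rule sums_mult)
    have s3: "(\<lambda>n. of_real (\<alpha>+1) * (c n * z^n) + z * (of_nat n * c n * z ^ (n-1)))
           sums (of_real (\<alpha>+1) * K z + z * g')"
      using s1 s2 by (rule sums_add)
    have s4: "of_real (\<alpha>+1) * (c n * z^n) + z * (of_nat n * c n * z ^ (n-1)) = a n * z^n" for n
    proof -
      have "\<alpha> + 1 + real n \<noteq> 0" using al by linarith
      then have ne: "of_real (\<alpha> + 1 + real n) \<noteq> (0::complex)" by (metis of_real_eq_0_iff)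
      have e1: "z * (of_nat n * c n * z ^ (n-1)) = of_nat n * c n * z^n"
        by (cases n) auto
      have e2: "of_real (\<alpha> + 1 + real n) * c n = a n"
        unfolding c_def by (metis ne nonzero_mult_div_cancel_left times_divide_eq_right)
      have "of_real (\<alpha>+1) * (c n * z^n) + of_nat n * c n * z^n = (of_real (\<alpha>+1) + of_nat n) * c n * z^n"
        by (simp only: distrib_right mult.assoc)
      also have "of_real (\<alpha>+1) + of_nat n = (of_real (\<alpha> + 1 + real n) :: complex)"
        by simp
      finally have f: "of_real (\<alpha>+1) * (c n * z^n) + of_nat n * c n * z^n = of_real (\<alpha> + 1 + real n) * c n * z^n" .
      show ?thesis by (simp only: e1 f e2)
    qed
    have "(\<lambda>n. of_real (\<alpha>+1) * (c n * z^n) + z * (of_nat n * c n * z ^ (n-1))) = (\<lambda>n. a n * z^n)"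
      by (rule ext) (rule s4)
    with s3 have "(\<lambda>n. a n * z^n) sums (of_real (\<alpha>+1) * K z + z * g')" by (simp only:)
    with sumsH[OF z] show "of_real (\<alpha>+1) * K z + z * deriv K z = H z"
      using dK sums_unique2 by blast
  qed
qed

lemma open_slit_ball: "open (slit_ball r)"
proof -
  have "closed {z::complex. Im z = 0 \<and> Re z \<le> 0}"
    by (intro closed_Collect_conj closed_Collect_eq closed_Collect_le continuous_intros)
  then show ?thesis unfolding slit_ball_def by (intro open_Diff) auto
qed

lemma slit_ball_nonpos: "z \<in> slit_ball r \<Longrightarrow> z \<notin> \<real>\<^sub>\<le>\<^sub>0"
  by (auto simp: slit_ball_def complex_nonpos_Reals_iff)

lemma slit_ball_nz: "z \<in> slit_ball r \<Longrightarrow> z \<noteq> 0"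
  by (auto simp: slit_ball_def)

lemma slit_ball_mono: "e \<le> r \<Longrightarrow> slit_ball e \<subseteq> slit_ball r"
  by (auto simp: slit_ball_def)

lemma slit_ball_ball: "z \<in> slit_ball r \<Longrightarrow> z \<in> ball 0 r"
  by (auto simp: slit_ball_def)

lemma cpowr_shift:
  fixes z :: complex
  assumes "z \<noteq> 0"
  shows "z powr (of_real \<beta>) = z powr (of_real (\<beta> - real j)) * z ^ j"
proof -
  have "z powr (of_real \<beta>) = z powr (of_real (\<beta> - real j) + of_nat j)" by simp
  also have "\<dots> = z powr (of_real (\<beta> - real j)) * z powr (of_nat j)" by (rule powr_add)
  also have "z powr (of_nat j) = z ^ j" using assms by simp
  finally show ?thesis .
qed

definition Sform :: "real \<Rightarrow> real \<Rightarrow> (complex \<Rightarrow> complex) \<Rightarrow> bool" where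
  "Sform r \<beta> f \<longleftrightarrow> (\<exists>K. K holomorphic_on ball 0 r \<and> (\<forall>z\<in>slit_ball r. f z = z powr (of_real \<beta>) * K z))"

lemma Sform_cong:
  assumes "Sform r \<beta> f" "\<And>z. z \<in> slit_ball r \<Longrightarrow> f z = f' z"
  shows "Sform r \<beta> f'"
  using assms unfolding Sform_def by metis

lemma Sform_shift:
  assumes "Sform r \<beta> f"
  shows "Sform r (\<beta> - real j) f"
proof -
  obtain K where K: "K holomorphic_on ball 0 r" "\<And>z. z\<in>slit_ball r \<Longrightarrow> f z = z powr (of_real \<beta>) * K z"
    using assms unfolding Sform_def by blast
  show ?thesis unfolding Sform_def
  proof (intro exI[of _ "\<lambda>z. z^j * K z"] conjI ballI)
    show "(\<lambda>z. z^j * K z) holomorphic_on ball 0 r" using K(1) by (intro holomorphic_intros)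
    fix z assume z: "z \<in> slit_ball r"
    show "f z = z powr (of_real (\<beta> - real j)) * (z^j * K z)"
      using K(2)[OF z] cpowr_shift[OF slit_ball_nz[OF z], of \<beta> j] by simp
  qed
qed

lemma Sform_shift':
  assumes "Sform r \<beta> f" "\<gamma> = \<beta> - real j"
  shows "Sform r \<gamma> f"
  using Sform_shift[OF assms(1)] assms(2) by simp

lemma Sform_sum:
  assumes "finite A" "\<And>k. k \<in> A \<Longrightarrow> Sform r \<beta> (f k)"
  shows "Sform r \<beta> (\<lambda>z. \<Sum>k\<in>A. f k z)"
  using assms
proof (induction A rule: finite_induct)
  case empty
  show ?case unfolding Sform_def by (intro exI[of _ "\<lambda>z. 0"]) auto
next
  case (insert x F)
  obtain K1 where K1: "K1 holomorphic_on ball 0 r" "\<And>z. z\<in>slit_ball r \<Longrightarrow> f x z = z powr (of_real \<beta>) * K1 z"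
    using insert.prems[of x] unfolding Sform_def by blast
  obtain K2 where K2: "K2 holomorphic_on ball 0 r" "\<And>z. z\<in>slit_ball r \<Longrightarrow> (\<Sum>k\<in>F. f k z) = z powr (of_real \<beta>) * K2 z"
    using insert.IH insert.prems unfolding Sform_def by blast
  show ?case unfolding Sform_def
  proof (intro exI[of _ "\<lambda>z. K1 z + K2 z"] conjI ballI)
    show "(\<lambda>z. K1 z + K2 z) holomorphic_on ball 0 r" using K1(1) K2(1) by (intro holomorphic_intros)
    fix z assume z: "z \<in> slit_ball r"
    show "(\<Sum>k\<in>insert x F. f k z) = z powr (of_real \<beta>) * (K1 z + K2 z)"
      using insert.hyps K1(2)[OF z] K2(2)[OF z] by (simp add: distrib_left)
  qed
qed

lemma Sform_deriv:
  assumes "Sform r \<beta> f"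
  shows "Sform r (\<beta> - 1) (deriv f) \<and> (\<forall>z\<in>slit_ball r. (f has_field_derivative deriv f z) (at z))"
proof -
  obtain K where K: "K holomorphic_on ball 0 r" "\<And>z. z\<in>slit_ball r \<Longrightarrow> f z = z powr (of_real \<beta>) * K z"
    using assms unfolding Sform_def by blast
  define K2 where "K2 z = of_real \<beta> * K z + z * deriv K z" for z
  have hK2: "K2 holomorphic_on ball 0 r" unfolding K2_def
    using K(1) by (intro holomorphic_intros holomorphic_deriv) auto
  have D: "(f has_field_derivative z powr (of_real (\<beta> - 1)) * K2 z) (at z)" if z: "z \<in> slit_ball r" for z
  proof -
    have zb: "z \<in> ball 0 r" using z by (rule slit_ball_ball)
    have dK: "(K has_field_derivative deriv K z) (at z)"
      using K(1) zb by (intro holomorphic_derivI) auto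
    have dp: "((\<lambda>w. w powr (of_real \<beta>)) has_field_derivative (of_real \<beta> * z powr (of_real \<beta> - 1))) (at z)"
      by (rule has_field_derivative_powr[OF slit_ball_nonpos[OF z]])
    have "((\<lambda>w. w powr (of_real \<beta>) * K w) has_field_derivative
            (of_real \<beta> * z powr (of_real \<beta> - 1)) * K z + z powr (of_real \<beta>) * deriv K z) (at z)"
      using DERIV_mult[OF dp dK] by (simp add: mult.commute)
    also have "(of_real \<beta> * z powr (of_real \<beta> - 1)) * K z + z powr (of_real \<beta>) * deriv K z
               = z powr (of_real (\<beta> - 1)) * K2 z"
      using cpowr_shift[OF slit_ball_nz[OF z], of \<beta> 1]
      by (simp add: K2_def algebra_simps)
    finally have "((\<lambda>w. w powr (of_real \<beta>) * K w) has_field_derivative z powr (of_real (\<beta> - 1)) * K2 z) (at z)" .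
    then show ?thesis
      by (rule has_field_derivative_transform_within_open[OF _ open_slit_ball z]) (use K(2) in auto)
  qed
  show ?thesis
  proof
    show "Sform r (\<beta> - 1) (deriv f)" unfolding Sform_def
      using hK2 D DERIV_imp_deriv by blast
    show "\<forall>z\<in>slit_ball r. (f has_field_derivative deriv f z) (at z)"
      using D DERIV_imp_deriv by metis
  qed
qed

lemma Sform_dz:
  assumes "Sform r \<beta> f"
  shows "Sform r (\<beta> - real k) (dz_pow k f)"
proof (induction k)
  case 0
  then show ?case using assms by (simp add: dz_pow_def)
next
  case (Suc k)
  have "Sform r (\<beta> - real k - 1) (deriv (dz_pow k f))"
    using Sform_deriv[OF Suc.IH] by blast
  then show ?case by (simp add: dz_pow_def algebra_simps)
qed

lemma Sform_dz_deriv: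
  assumes "Sform r \<beta> f" "z \<in> slit_ball r"
  shows "(dz_pow k f has_field_derivative dz_pow (Suc k) f z) (at z)"
  using Sform_deriv[OF Sform_dz[OF assms(1), of k]] assms(2) by (simp add: dz_pow_def)

lemma Sform_const:
  assumes S: "Sform r \<beta> f" and nI: "\<beta> \<notin> \<int>" and e: "0 < e" "e \<le> r"
    and fc: "\<And>z. z \<in> slit_ball e \<Longrightarrow> f z = c"
  shows "c = 0"
proof (rule ccontr)
  assume c0: "c \<noteq> 0"
  obtain K where K: "K holomorphic_on ball 0 r" "\<And>z. z\<in>slit_ball r \<Longrightarrow> f z = z powr (of_real \<beta>) * K z"
    using S unfolding Sform_def by blast
  define s where "s = e / 2"
  have s: "0 < s" "s < e" "s < r" using e by (auto simp: s_def)
  define L where "L \<theta> = complex_of_real (ln s) + \<i> * of_real \<theta>" for \<theta> :: real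
  define w where "w \<theta> = exp (L \<theta>)" for \<theta>
  define D where "D \<theta> = K (w \<theta>) - c * exp (- (of_real \<beta> * L \<theta>))" for \<theta>
  have ReL: "Re (L \<theta>) = ln s" and ImL: "Im (L \<theta>) = \<theta>" for \<theta> by (simp_all add: L_def)
  have wn: "norm (w \<theta>) = s" for \<theta> using s by (simp add: w_def ReL)
  have Imw: "Im (w \<theta>) = s * sin \<theta>" for \<theta> using s by (simp add: w_def Im_exp ReL ImL)
  have wpow: "w \<theta> powr (of_real \<beta>) = exp (of_real \<beta> * L \<theta>)" if "-pi < \<theta>" "\<theta> \<le> pi" for \<theta>
    using that by (simp add: w_def powr_def ImL)
  have zero: "D \<theta> = 0" if "\<theta> \<in> {pi/2<..<pi} \<union> {-pi<..< -pi/2}" for \<theta>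
  proof -
    have "sin \<theta> \<noteq> 0"
    proof (cases "\<theta> > 0")
      case True then show ?thesis using that sin_gt_zero[of \<theta>] by auto
    next
      case False
      then have "sin (-\<theta>) > 0" using that by (intro sin_gt_zero) auto
      then show ?thesis by auto
    qed
    then have "Im (w \<theta>) \<noteq> 0" using s by (simp add: Imw)
    then have we: "w \<theta> \<in> slit_ball e" using wn s by (auto simp: slit_ball_def)
    then have wr: "w \<theta> \<in> slit_ball r" using slit_ball_mono[OF e(2)] by blast
    have "c = exp (of_real \<beta> * L \<theta>) * K (w \<theta>)"
      using fc[OF we] K(2)[OF wr] wpow[of \<theta>] that by auto
    then have "K (w \<theta>) = c * exp (- (of_real \<beta> * L \<theta>))"
      by (simp add: exp_minus field_simps)
    then show ?thesis by (simp add: D_def)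
  qed
  have contD: "isCont D \<theta>" for \<theta>
  proof -
    have "w \<theta> \<in> ball 0 r" using wn s by auto
    then have "isCont K (w \<theta>)"
      using K(1) holomorphic_on_imp_continuous_on continuous_on_eq_continuous_at open_ball by blast
    moreover have "isCont w \<theta>" unfolding w_def L_def by (intro continuous_intros)
    ultimately have "isCont (\<lambda>\<theta>. K (w \<theta>)) \<theta>" using isCont_o2 by blast
    then show ?thesis unfolding D_def L_def by (intro continuous_intros)
  qed
  have D1: "D pi = 0"
  proof -
    have "(D \<longlongrightarrow> D pi) (at_left pi)"
      using contD[of pi] by (simp add: isCont_def filterlim_at_split)
    moreover have "(D \<longlongrightarrow> 0) (at_left pi)"
    proof (rule tendsto_eventually)
      have "eventually (\<lambda>x. x \<in> {pi/2<..<pi}) (at_left pi)"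
        by (rule eventually_at_left_real) simp
      then show "eventually (\<lambda>x. D x = 0) (at_left pi)"
        by eventually_elim (use zero in auto)
    qed
    ultimately show ?thesis using tendsto_unique trivial_limit_at_left_real by blast
  qed
  have D2: "D (-pi) = 0"
  proof -
    have "(D \<longlongrightarrow> D (-pi)) (at_right (-pi))"
      using contD[of "-pi"] by (simp add: isCont_def filterlim_at_split)
    moreover have "(D \<longlongrightarrow> 0) (at_right (-pi))"
    proof (rule tendsto_eventually)
      have "eventually (\<lambda>x. x \<in> {-pi<..< -pi/2}) (at_right (-pi))"
        by (rule eventually_at_right_real) simp
      then show "eventually (\<lambda>x. D x = 0) (at_right (-pi))"
        by eventually_elim (use zero in auto)
    qed
    ultimately show ?thesis using tendsto_unique trivial_limit_at_right_real by blast
  qed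
  have wpi: "w pi = w (-pi)"
    by (simp add: w_def L_def exp_add exp_diff)
  have "c * exp (- (of_real \<beta> * L pi)) = c * exp (- (of_real \<beta> * L (-pi)))"
    using D1 D2 wpi by (simp add: D_def)
  then have eq: "exp (- (of_real \<beta> * L pi)) = exp (- (of_real \<beta> * L (-pi)))"
    using c0 by simp
  have "exp (- (of_real \<beta> * L pi) - (- (of_real \<beta> * L (-pi))))
     = exp (- (of_real \<beta> * L pi)) / exp (- (of_real \<beta> * L (-pi)))" by (rule exp_diff)
  also have "\<dots> = 1" by (metis eq divide_self exp_not_eq_zero)
  finally have "exp (- (of_real \<beta> * L pi) - (- (of_real \<beta> * L (-pi)))) = 1" .
  moreover have "- (of_real \<beta> * L pi) - (- (of_real \<beta> * L (-pi))) = - (2 * \<i> * of_real (\<beta> * pi))"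
    by (simp add: L_def algebra_simps)
  ultimately have "exp (- (2 * \<i> * of_real (\<beta> * pi))) = 1" by simp
  then obtain n :: int where "Im (- (2 * \<i> * of_real (\<beta> * pi))) = of_int (2 * n) * pi"
    unfolding exp_eq_1 by blast
  then have "- (2 * (\<beta> * pi)) = 2 * of_int n * pi" by simp
  then have "pi * (\<beta> + of_int n) = 0" by (simp add: algebra_simps)
  then have "\<beta> = of_int (-n)" using pi_gt_zero by simp
  then show False using nI by (metis Ints_of_int)
qed

lemma linepath_in_slit:
  assumes z: "z \<in> slit_ball r" and t: "0 < t" "t \<le> 1"
  shows "linepath 0 z t \<in> slit_ball r"
proof -
  have lp: "linepath 0 z t = of_real t * z" by (simp add: linepath_def scaleR_conv_of_real)
  have "norm (of_real t * z) = t * norm z" using t by (simp add: norm_mult)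
  also have "\<dots> \<le> norm z" using t by (simp add: mult_left_le_one_le)
  also have "\<dots> < r" using z by (auto simp: slit_ball_def)
  finally have n: "norm (of_real t * z) < r" .
  have "\<not> (Im (of_real t * z) = 0 \<and> Re (of_real t * z) \<le> 0)"
  proof
    assume a: "Im (of_real t * z) = 0 \<and> Re (of_real t * z) \<le> 0"
    then have "Im z = 0" "Re z \<le> 0" using t by (auto simp: mult_le_0_iff)
    then show False using z by (auto simp: slit_ball_def)
  qed
  then show ?thesis using n lp by (auto simp: slit_ball_def)
qed

lemma telescope_aux:
  fixes u :: "nat \<Rightarrow> complex"
  shows "(\<Sum>j<Suc k. u j - (if j = 0 then 0 else u (j-1))) = u k"
  by (induction k) auto

lemma Taylor_FTC:
  fixes P :: "nat \<Rightarrow> complex \<Rightarrow> complex"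
  assumes z: "z \<in> slit_ball r" and k: "k \<ge> 1"
    and dP: "\<And>j w. w \<in> slit_ball r \<Longrightarrow> (P (Suc j) has_field_derivative P j w) (at w)"
    and cP: "\<And>j. j \<ge> 1 \<Longrightarrow> isCont (P j) 0" and zP: "\<And>j. j \<ge> 1 \<Longrightarrow> P j 0 = 0"
  shows "((\<lambda>w. (z-w)^(k-1) / fact (k-1) * P 0 w) has_contour_integral P k z) (linepath 0 z)"
proof -
  define Q where "Q w = (\<Sum>j<k. (z-w)^j / fact j * P (k-j) w)" for w
  have dQ: "(Q has_field_derivative (z-w)^(k-1) / fact (k-1) * P 0 w) (at w)"
    if w: "w \<in> slit_ball r" for w
  proof -
    define u where "u j = (z-w)^j / fact j * P (k - Suc j) w" for j
    have dj: "((\<lambda>w. (z-w)^j / fact j * P (k-j) w) has_field_derivative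
                 (u j - (if j = 0 then 0 else u (j-1)))) (at w)" if j: "j < k" for j
    proof -
      have d1: "((\<lambda>w. (z-w)^j / fact j) has_field_derivative
                  (if j = 0 then 0 else - ((z-w)^(j-1) / fact (j-1)))) (at w)"
      proof (cases j)
        case 0 then show ?thesis by simp
      next
        case (Suc i)
        have "((\<lambda>w. (z-w)^Suc i / fact (Suc i)) has_field_derivative
                 (of_nat (Suc i) * (z-w)^i * (-1)) / fact (Suc i)) (at w)"
        proof (rule DERIV_cdivide)
          show "((\<lambda>w. (z-w)^Suc i) has_field_derivative of_nat (Suc i) * (z-w)^i * (-1)) (at w)"
            by (intro derivative_eq_intros) auto
        qed
        moreover have "(of_nat (Suc i) * (z-w)^i * (-1)) / fact (Suc i) = - ((z-w)^i / (fact i :: complex))"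
        proof -
          have ne: "(of_nat (Suc i)::complex) \<noteq> 0" by (metis of_nat_eq_0_iff nat.distinct(1))
          show ?thesis using ne by (simp add: fact_Suc field_simps del: of_nat_Suc)
        qed
        ultimately show ?thesis using Suc by simp
      qed
      have kj: "k - j = Suc (k - Suc j)" using j by simp
      have d2: "(P (k-j) has_field_derivative P (k - Suc j) w) (at w)"
        unfolding kj by (rule dP[OF w])
      have "((\<lambda>w. (z-w)^j / fact j * P (k-j) w) has_field_derivative
              (if j = 0 then 0 else - ((z-w)^(j-1) / fact (j-1))) * P (k-j) w + (z-w)^j / fact j * P (k - Suc j) w) (at w)"
        using DERIV_mult[OF d1 d2] by (simp only: mult.commute[of "P (k - Suc j) w"])
      moreover have "(if j = 0 then 0 else - ((z-w)^(j-1) / fact (j-1))) * P (k-j) w + (z-w)^j / fact j * P (k - Suc j) w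
                     = u j - (if j = 0 then 0 else u (j-1))"
      proof (cases j)
        case 0 then show ?thesis by (simp add: u_def)
      next
        case (Suc i)
        then have "k - Suc (j - 1) = k - j" by simp
        then show ?thesis using Suc by (simp add: u_def)
      qed
      ultimately show ?thesis by simp
    qed
    have "(Q has_field_derivative (\<Sum>j<k. u j - (if j = 0 then 0 else u (j-1)))) (at w)"
      unfolding Q_def by (rule DERIV_sum) (use dj in auto)
    moreover have "(\<Sum>j<k. u j - (if j = 0 then 0 else u (j-1))) = u (k-1)"
      using telescope_aux[of u "k-1"] k by simp
    moreover have "u (k-1) = (z-w)^(k-1) / fact (k-1) * P 0 w"
      using k by (simp add: u_def)
    ultimately show ?thesis by simp
  qed
  have cQ0: "isCont Q 0"
    unfolding Q_def by (intro continuous_intros cP) auto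
  define g where "g = Q \<circ> linepath 0 z"
  have contg: "continuous_on {0..1} g"
  proof (intro continuous_at_imp_continuous_on ballI)
    fix t :: real assume t: "t \<in> {0..1}"
    show "isCont g t"
    proof (cases "t = 0")
      case True
      then show ?thesis unfolding g_def
        using cQ0 by (intro continuous_at_compose) (auto simp: linepath_def intro: continuous_intros)
    next
      case False
      then have "linepath 0 z t \<in> slit_ball r" using t by (intro linepath_in_slit[OF z]) auto
      then have "isCont Q (linepath 0 z t)" using dQ DERIV_isCont by blast
      then show ?thesis unfolding g_def
        by (intro continuous_at_compose) (auto simp: linepath_def intro: continuous_intros)
    qed
  qed
  have derg: "(g has_vector_derivative (z - 0) * ((z - linepath 0 z t)^(k-1) / fact (k-1) * P 0 (linepath 0 z t))) (at t)"
    if t: "t \<in> {0<..<1}" for t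
  proof -
    have "linepath 0 z t \<in> slit_ball r" using t by (intro linepath_in_slit[OF z]) auto
    then show ?thesis unfolding g_def
      by (intro field_vector_diff_chain_at has_vector_derivative_linepath_within dQ)
  qed
  have "((\<lambda>t. (z - 0) * ((z - linepath 0 z t)^(k-1) / fact (k-1) * P 0 (linepath 0 z t))) has_integral (g 1 - g 0)) {0..1}"
    by (rule fundamental_theorem_of_calculus_interior[OF _ contg derg]) auto
  moreover have "g 1 = P k z"
  proof -
    obtain k' where k': "k = Suc k'" using k by (cases k) auto
    have "g 1 = Q z" by (simp add: g_def)
    also have "\<dots> = P k z" unfolding Q_def k' sum.lessThan_Suc_shift by simp
    finally show ?thesis .
  qed
  moreover have "g 0 = 0"
    by (simp add: g_def Q_def zP)
  ultimately have "((\<lambda>t. (z - linepath 0 z t)^(k-1) / fact (k-1) * P 0 (linepath 0 z t) * (z - 0)) has_integral P k z) {0..1}"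
    by (simp add: mult.commute)
  then show ?thesis by (simp only: has_contour_integral_linepath)
qed

lemma int_from0_eq:
  fixes P :: "nat \<Rightarrow> complex \<Rightarrow> complex"
  assumes z: "z \<in> slit_ball r" and k: "k \<ge> 1"
    and dP: "\<And>j w. w \<in> slit_ball r \<Longrightarrow> (P (Suc j) has_field_derivative P j w) (at w)"
    and cP: "\<And>j. j \<ge> 1 \<Longrightarrow> isCont (P j) 0" and zP: "\<And>j. j \<ge> 1 \<Longrightarrow> P j 0 = 0"
    and psi: "\<And>w. w \<in> slit_ball r \<Longrightarrow> \<psi> w = P 0 w"
  shows "int_from0 k \<psi> z = P k z"
proof -
  have "((\<lambda>w. fact (k-1) * ((z-w)^(k-1) / fact (k-1) * P 0 w)) has_contour_integral (fact (k-1) * P k z)) (linepath 0 z)"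
    by (rule has_contour_integral_lmul[OF Taylor_FTC[of z r k P, OF z k dP cP zP]])
  then have h1: "((\<lambda>w. (z-w)^(k-1) * P 0 w) has_contour_integral (fact (k-1) * P k z)) (linepath 0 z)"
    by simp
  have "((\<lambda>w. (z-w)^(k-1) * \<psi> w) has_contour_integral (fact (k-1) * P k z)) (linepath 0 z)"
    unfolding has_contour_integral_linepath
  proof (rule has_integral_spike_finite_eq[THEN iffD1, of "{0}"])
    show "((\<lambda>x. (z - linepath 0 z x)^(k-1) * P 0 (linepath 0 z x) * (z - 0)) has_integral fact (k-1) * P k z) {0..1}"
      using h1 unfolding has_contour_integral_linepath .
    fix t assume t: "t \<in> {0..(1::real)} - {0}"
    then have "linepath 0 z t \<in> slit_ball r" by (intro linepath_in_slit[OF z]) auto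
    then show "(z - linepath 0 z t)^(k-1) * \<psi> (linepath 0 z t) * (z - 0) = (z - linepath 0 z t)^(k-1) * P 0 (linepath 0 z t) * (z - 0)"
      using psi by simp
  qed auto
  then have ci: "contour_integral (linepath 0 z) (\<lambda>w. (z-w)^(k-1) * \<psi> w) = fact (k-1) * P k z"
    by (rule contour_integral_unique)
  obtain k' where k': "k = Suc k'" using k by (cases k) auto
  have G: "Gamma (of_nat k :: complex) = fact (k-1)"
    using Gamma_fact[of k', where 'a=complex] k' by (simp add: add.commute)
  show ?thesis unfolding int_from0_def ci G by simp
qed

lemma powr_mult_deriv:
  fixes w :: complex
  assumes w: "w \<notin> \<real>\<^sub>\<le>\<^sub>0" and dK: "(K has_field_derivative K') (at w)"
  shows "((\<lambda>x. x powr of_real (\<gamma>+1) * K x) has_field_derivative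
            w powr of_real \<gamma> * (of_real (\<gamma>+1) * K w + w * K')) (at w)"
proof -
  have wnz: "w \<noteq> 0" using w by auto
  have dp: "((\<lambda>x. x powr of_real (\<gamma>+1)) has_field_derivative (of_real (\<gamma>+1) * w powr (of_real (\<gamma>+1) - 1))) (at w)"
    by (rule has_field_derivative_powr[OF w])
  have e1: "of_real (\<gamma>+1) - 1 = (of_real \<gamma> :: complex)" by simp
  have e2: "w powr of_real (\<gamma>+1) = w powr of_real \<gamma> * w"
    using cpowr_shift[OF wnz, of "\<gamma>+1" 1] by simp
  have "((\<lambda>x. x powr of_real (\<gamma>+1) * K x) has_field_derivative
          (of_real (\<gamma>+1) * w powr (of_real (\<gamma>+1) - 1)) * K w + K' * w powr of_real (\<gamma>+1)) (at w)"
    by (rule DERIV_mult[OF dp dK])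
  also have "(of_real (\<gamma>+1) * w powr (of_real (\<gamma>+1) - 1)) * K w + K' * w powr of_real (\<gamma>+1)
        = w powr of_real \<gamma> * (of_real (\<gamma>+1) * K w + w * K')"
    unfolding e1 e2 by (simp add: algebra_simps)
  finally show ?thesis .
qed

lemma powr_mult_cont0:
  fixes K :: "complex \<Rightarrow> complex"
  assumes g: "\<gamma> > 0" and K: "isCont K 0"
  shows "isCont (\<lambda>w. w powr of_real \<gamma> * K w) 0" and "(\<lambda>w. w powr of_real \<gamma> * K w) 0 = 0"
proof -
  have "((\<lambda>w::complex. norm w powr \<gamma>) \<longlongrightarrow> 0) (at 0)"
    by (rule tendsto_zero_powrI) (auto intro!: tendsto_norm_zero tendsto_ident_at g)
  then have "((\<lambda>w::complex. norm (w powr of_real \<gamma>)) \<longlongrightarrow> 0) (at 0)"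
    by (simp add: norm_powr_real_powr')
  then have t1: "((\<lambda>w::complex. w powr of_real \<gamma>) \<longlongrightarrow> 0) (at 0)"
    by (simp only: tendsto_norm_zero_iff)
  have "((\<lambda>w. w powr of_real \<gamma> * K w) \<longlongrightarrow> 0 * K 0) (at 0)"
    using K unfolding isCont_def by (intro tendsto_mult t1)
  then show "isCont (\<lambda>w. w powr of_real \<gamma> * K w) 0"
    unfolding isCont_def by simp
  show "(\<lambda>w. w powr of_real \<gamma> * K w) 0 = 0" by simp
qed

lemma Iter:
  fixes \<alpha> :: real and H :: "complex \<Rightarrow> complex"
  assumes al: "\<alpha> > -1" and hol: "H holomorphic_on ball 0 r" and r: "r > 0"
  shows "\<exists>P. (\<forall>w. P 0 w = w powr of_real \<alpha> * H w) \<and> (\<forall>j. Sform r (\<alpha> + real j) (P j))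
           \<and> (\<forall>j w. w \<in> slit_ball r \<longrightarrow> (P (Suc j) has_field_derivative P j w) (at w))
           \<and> (\<forall>j\<ge>1. isCont (P j) 0 \<and> P j 0 = 0)"
proof -
  define AD where "AD \<gamma> Hh = (SOME K. K holomorphic_on ball 0 r \<and>
       (\<forall>z\<in>ball 0 r. of_real (\<gamma>+1) * K z + z * deriv K z = Hh z))" for \<gamma> Hh
  have ADp: "AD \<gamma> Hh holomorphic_on ball 0 r \<and>
       (\<forall>z\<in>ball 0 r. of_real (\<gamma>+1) * AD \<gamma> Hh z + z * deriv (AD \<gamma> Hh) z = Hh z)"
    if "\<gamma> > -1" "Hh holomorphic_on ball 0 r" for \<gamma> Hh
    unfolding AD_def by (rule someI_ex[OF antideriv_series[OF that]])
  define Ks where "Ks = rec_nat H (\<lambda>j Kj. AD (\<alpha> + real j) Kj)"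
  have Ks0: "Ks 0 = H" and KsS: "Ks (Suc j) = AD (\<alpha> + real j) (Ks j)" for j
    by (simp_all add: Ks_def)
  have al': "\<alpha> + real j > -1" for j using al by simp
  have Kh: "Ks j holomorphic_on ball 0 r" for j
  proof (induction j)
    case 0 then show ?case using hol by (simp add: Ks0)
  next
    case (Suc j) then show ?case using ADp[OF al'] by (simp add: KsS)
  qed
  have Kode: "of_real (\<alpha> + real j + 1) * Ks (Suc j) z + z * deriv (Ks (Suc j)) z = Ks j z"
    if "z \<in> ball 0 r" for j z
    using ADp[OF al'[of j] Kh[of j]] that by (simp add: KsS)
  define P where "P j w = w powr of_real (\<alpha> + real j) * Ks j w" for j w
  show ?thesis
  proof (intro exI[of _ P] conjI allI impI)
    fix w show "P 0 w = w powr of_real \<alpha> * H w" by (simp add: P_def Ks0)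
  next
    fix j show "Sform r (\<alpha> + real j) (P j)"
      unfolding Sform_def P_def using Kh by blast
  next
    fix j w assume w: "w \<in> slit_ball r"
    have wb: "w \<in> ball 0 r" using w by (rule slit_ball_ball)
    have dK: "(Ks (Suc j) has_field_derivative deriv (Ks (Suc j)) w) (at w)"
      using Kh wb by (intro holomorphic_derivI) auto
    have "((\<lambda>x. x powr of_real ((\<alpha> + real j)+1) * Ks (Suc j) x) has_field_derivative
            w powr of_real (\<alpha> + real j) * (of_real ((\<alpha> + real j)+1) * Ks (Suc j) w + w * deriv (Ks (Suc j)) w)) (at w)"
      by (rule powr_mult_deriv[OF slit_ball_nonpos[OF w] dK])
    also have "of_real ((\<alpha> + real j)+1) * Ks (Suc j) w + w * deriv (Ks (Suc j)) w = Ks j w"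
      using Kode[OF wb, of j] by simp
    finally show "(P (Suc j) has_field_derivative P j w) (at w)"
      unfolding P_def by (simp add: add_ac)
  next
    fix j :: nat assume j: "j \<ge> 1"
    have g: "\<alpha> + real j > 0" using al j by simp
    have "isCont (Ks j) 0"
      using Kh[of j] r holomorphic_on_imp_continuous_on continuous_on_eq_continuous_at open_ball
      by (metis centre_in_ball)
    then show "isCont (P j) 0" "P j 0 = 0"
      using powr_mult_cont0[OF g] unfolding P_def[abs_def] by auto
  qed
qed

lemma connected_slit_ball:
  assumes e: "0 < e"
  shows "connected (slit_ball e)"
proof (rule starlike_imp_connected)
  define a where "a = complex_of_real (e/2)"
  have a: "a \<in> slit_ball e" using e by (simp add: a_def slit_ball_def)
  have "closed_segment a x \<subseteq> slit_ball e" if x: "x \<in> slit_ball e" for x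
  proof
    fix y assume y: "y \<in> closed_segment a x"
    have "y \<in> ball 0 e"
      using closed_segment_subset[OF slit_ball_ball[OF a] slit_ball_ball[OF x] convex_ball] y by blast
    moreover obtain u where u: "0 \<le> u" "u \<le> 1" "y = (1 - u) *\<^sub>R a + u *\<^sub>R x"
      using y in_segment(1) by blast
    have "\<not> (Im y = 0 \<and> Re y \<le> 0)"
    proof
      assume h: "Im y = 0 \<and> Re y \<le> 0"
      have Imy: "Im y = u * Im x" and Rey: "Re y = (1-u) * (e/2) + u * Re x"
        using u(3) by (simp_all add: a_def)
      show False
      proof (cases "u = 0")
        case True then show False using h Rey e by simp
      next
        case False
        then have "Im x = 0" using h Imy by simp
        then have "Re x > 0" using x by (auto simp: slit_ball_def)
        then have "u * Re x > 0" using False u by simp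
        moreover have "(1-u) * (e/2) \<ge> 0" using u e by simp
        ultimately show False using h Rey by linarith
      qed
    qed
    ultimately show "y \<in> slit_ball e" by (simp add: slit_ball_def)
  qed
  then show "starlike (slit_ball e)" unfolding starlike_def using a by blast
qed

lemma Sform_add:
  assumes "Sform r \<beta> f1" "Sform r \<beta> f2"
  shows "Sform r \<beta> (\<lambda>z. f1 z + f2 z)"
proof -
  obtain K1 where K1: "K1 holomorphic_on ball 0 r" "\<And>z. z\<in>slit_ball r \<Longrightarrow> f1 z = z powr (of_real \<beta>) * K1 z"
    using assms(1) unfolding Sform_def by blast
  obtain K2 where K2: "K2 holomorphic_on ball 0 r" "\<And>z. z\<in>slit_ball r \<Longrightarrow> f2 z = z powr (of_real \<beta>) * K2 z"
    using assms(2) unfolding Sform_def by blast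
  show ?thesis unfolding Sform_def
    by (intro exI[of _ "\<lambda>z. K1 z + K2 z"] conjI ballI holomorphic_intros K1(1) K2(1))
       (simp add: K1(2) K2(2) distrib_left)
qed

theorem propositionB1:
  fixes \<rho> :: real and g :: "complex \<Rightarrow> complex" and \<phi> :: "complex \<Rightarrow> complex"
    and h :: "int \<Rightarrow> complex \<Rightarrow> complex" and n m :: nat and r :: real
  assumes "\<rho> > -1" and "\<rho> \<notin> \<int>"
    and "r > 0"
    and "g holomorphic_on ball 0 r"
    and "\<And>z. z \<in> slit_ball r \<Longrightarrow> \<phi> z = z powr (of_real \<rho>) * g z"
    and "\<And>k. k \<in> {-int m..int n} \<Longrightarrow> h k holomorphic_on ball 0 r"
  shows "vanishes_near0 (\<lambda>z.
            (\<Sum>k=0..n. dz_pow k (\<lambda>w. h (int k) w * \<phi> w) z)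
          + (\<Sum>k=1..m. int_from0 k (\<lambda>w. h (- int k) w * \<phi> w) z))
     \<longleftrightarrow> vanishes_near0 (\<lambda>z.
            (\<Sum>k=1..n. dz_pow (k - 1) (\<lambda>w. h (int k) w * \<phi> w) z)
          + (\<Sum>k=0..m. int_from0 (k + 1) (\<lambda>w. h (- int k) w * \<phi> w) z))"
proof -
  note rho = assms(1) and nI = assms(2) and r = assms(3) and gh = assms(4) and phi = assms(5) and hh = assms(6)
  have Spsi: "Sform r \<rho> (\<lambda>w. h k w * \<phi> w)" if k: "k \<in> {-int m..int n}" for k
    unfolding Sform_def
  proof (intro exI[of _ "\<lambda>w. h k w * g w"] conjI ballI)
    show "(\<lambda>w. h k w * g w) holomorphic_on ball 0 r" using hh[OF k] gh by (intro holomorphic_intros)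
    fix z assume "z \<in> slit_ball r"
    then show "h k z * \<phi> z = z powr of_real \<rho> * (h k z * g z)" using phi by simp
  qed
  have "\<forall>k. \<exists>P. k \<le> m \<longrightarrow>
          (\<forall>w. P 0 w = w powr of_real \<rho> * (h (- int k) w * g w)) \<and> (\<forall>j. Sform r (\<rho> + real j) (P j))
           \<and> (\<forall>j w. w \<in> slit_ball r \<longrightarrow> (P (Suc j) has_field_derivative P j w) (at w))
           \<and> (\<forall>j\<ge>1. isCont (P j) 0 \<and> P j 0 = 0)"
  proof (intro allI)
    fix k
    show "\<exists>P. k \<le> m \<longrightarrow>
          (\<forall>w. P 0 w = w powr of_real \<rho> * (h (- int k) w * g w)) \<and> (\<forall>j. Sform r (\<rho> + real j) (P j))
           \<and> (\<forall>j w. w \<in> slit_ball r \<longrightarrow> (P (Suc j) has_field_derivative P j w) (at w))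
           \<and> (\<forall>j\<ge>1. isCont (P j) 0 \<and> P j 0 = 0)"
    proof (cases "k \<le> m")
      case True
      then have "- int k \<in> {-int m..int n}" by simp
      then have "(\<lambda>w. h (- int k) w * g w) holomorphic_on ball 0 r" using hh gh by (intro holomorphic_intros)
      from Iter[OF rho this r] show ?thesis by blast
    next
      case False then show ?thesis by blast
    qed
  qed
  then obtain PP where PP: "\<And>k. k \<le> m \<Longrightarrow>
          (\<forall>w. PP k 0 w = w powr of_real \<rho> * (h (- int k) w * g w)) \<and> (\<forall>j. Sform r (\<rho> + real j) (PP k j))
           \<and> (\<forall>j w. w \<in> slit_ball r \<longrightarrow> (PP k (Suc j) has_field_derivative PP k j w) (at w))
           \<and> (\<forall>j\<ge>1. isCont (PP k j) 0 \<and> PP k j 0 = 0)"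
    by metis
  have PP0: "PP k 0 z = h (- int k) z * \<phi> z" if "k \<le> m" "z \<in> slit_ball r" for k z
    using PP[OF that(1)] phi[OF that(2)] by simp
  have PPint: "int_from0 j (\<lambda>w. h (- int k) w * \<phi> w) z = PP k j z"
    if k: "k \<le> m" and j: "j \<ge> 1" and z: "z \<in> slit_ball r" for k j z
  proof (rule int_from0_eq[OF z j])
    show "\<And>i w. w \<in> slit_ball r \<Longrightarrow> (PP k (Suc i) has_field_derivative PP k i w) (at w)"
      using PP[OF k] by blast
    show "\<And>i. 1 \<le> i \<Longrightarrow> isCont (PP k i) 0" using PP[OF k] by blast
    show "\<And>i. 1 \<le> i \<Longrightarrow> PP k i 0 = 0" using PP[OF k] by blast
    show "\<And>w. w \<in> slit_ball r \<Longrightarrow> h (- int k) w * \<phi> w = PP k 0 w"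
      using PP0[OF k] by simp
  qed
  define F where "F z = (\<Sum>k=0..n. dz_pow k (\<lambda>w. h (int k) w * \<phi> w) z)
          + (\<Sum>k=1..m. int_from0 k (\<lambda>w. h (- int k) w * \<phi> w) z)" for z
  define G where "G z = (\<Sum>k=1..n. dz_pow (k - 1) (\<lambda>w. h (int k) w * \<phi> w) z)
          + (\<Sum>k=0..m. int_from0 (k + 1) (\<lambda>w. h (- int k) w * \<phi> w) z)" for z
  define G' where "G' z = (\<Sum>k=1..n. dz_pow (k - 1) (\<lambda>w. h (int k) w * \<phi> w) z)
          + (\<Sum>k=0..m. PP k (k+1) z)" for z
  have GG': "G z = G' z" if z: "z \<in> slit_ball r" for z
    unfolding G_def G'_def using PPint z by simp
  have dG: "(G has_field_derivative F z) (at z)" if z: "z \<in> slit_ball r" for z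
  proof -
    have d1: "((\<lambda>z. \<Sum>k=1..n. dz_pow (k - 1) (\<lambda>w. h (int k) w * \<phi> w) z) has_field_derivative
               (\<Sum>k=1..n. dz_pow k (\<lambda>w. h (int k) w * \<phi> w) z)) (at z)"
    proof (rule DERIV_sum)
      fix k assume k: "k \<in> {1..n}"
      then have "int k \<in> {-int m..int n}" by simp
      from Sform_dz_deriv[OF Spsi[OF this] z, of "k-1"] k
      show "((\<lambda>z. dz_pow (k - 1) (\<lambda>w. h (int k) w * \<phi> w) z) has_field_derivative
               dz_pow k (\<lambda>w. h (int k) w * \<phi> w) z) (at z)" by simp
    qed
    have d2: "((\<lambda>z. \<Sum>k=0..m. PP k (k+1) z) has_field_derivative (\<Sum>k=0..m. PP k k z)) (at z)"
    proof (rule DERIV_sum)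
      fix k assume k: "k \<in> {0..m}"
      then show "((\<lambda>z. PP k (k+1) z) has_field_derivative PP k k z) (at z)"
        using PP[of k] z by simp
    qed
    have "(G' has_field_derivative (\<Sum>k=1..n. dz_pow k (\<lambda>w. h (int k) w * \<phi> w) z) + (\<Sum>k=0..m. PP k k z)) (at z)"
      unfolding G'_def[abs_def] by (rule DERIV_add[OF d1 d2])
    moreover have "(\<Sum>k=1..n. dz_pow k (\<lambda>w. h (int k) w * \<phi> w) z) + (\<Sum>k=0..m. PP k k z) = F z"
    proof -
      have s1: "(\<Sum>k=0..n. dz_pow k (\<lambda>w. h (int k) w * \<phi> w) z)
              = h 0 z * \<phi> z + (\<Sum>k=1..n. dz_pow k (\<lambda>w. h (int k) w * \<phi> w) z)"
        by (subst sum.atLeast_Suc_atMost) (auto simp: dz_pow_def)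
      have s2: "(\<Sum>k=0..m. PP k k z) = h 0 z * \<phi> z + (\<Sum>k=1..m. int_from0 k (\<lambda>w. h (- int k) w * \<phi> w) z)"
      proof -
        have "(\<Sum>k=0..m. PP k k z) = PP 0 0 z + (\<Sum>k=1..m. PP k k z)"
          by (subst sum.atLeast_Suc_atMost) auto
        also have "PP 0 0 z = h 0 z * \<phi> z" using PP0[of 0 z] z by simp
        also have "(\<Sum>k=1..m. PP k k z) = (\<Sum>k=1..m. int_from0 k (\<lambda>w. h (- int k) w * \<phi> w) z)"
          by (rule sum.cong) (use PPint z in auto)
        finally show ?thesis .
      qed
      show ?thesis unfolding F_def s1 s2 by (simp add: algebra_simps)
    qed
    ultimately have "(G' has_field_derivative F z) (at z)" by simp
    then show ?thesis
      by (rule has_field_derivative_transform_within_open[OF _ open_slit_ball z]) (use GG' in auto)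
  qed
  have SG: "Sform r (\<rho> - real n) G"
  proof (rule Sform_cong[OF _ GG'[symmetric]])
    show "Sform r (\<rho> - real n) G'"
      unfolding G'_def
    proof (intro Sform_add Sform_sum)
      fix k assume k: "k \<in> {1..n}"
      then have "int k \<in> {-int m..int n}" by simp
      from Sform_dz[OF Spsi[OF this], of "k-1"]
      show "Sform r (\<rho> - real n) (dz_pow (k - 1) (\<lambda>w. h (int k) w * \<phi> w))"
        by (rule Sform_shift'[where j = "n - (k-1)"]) (use k in auto)
    next
      fix k assume k: "k \<in> {0..m}"
      then have "k \<le> m" by simp
      then have "Sform r (\<rho> + real (k+1)) (PP k (k+1))" using PP[of k] by blast
      then show "Sform r (\<rho> - real n) (PP k (k+1))"
        by (rule Sform_shift'[where j = "n + k + 1"]) auto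
    qed auto
  qed auto
  have nI': "\<rho> - real n \<notin> \<int>"
  proof
    assume "\<rho> - real n \<in> \<int>"
    then have "\<rho> - real n + real n \<in> \<int>" by (intro Ints_add) auto
    then show False using nI by simp
  qed
  show ?thesis
    unfolding F_def[symmetric] G_def[symmetric]
  proof
    assume "vanishes_near0 F"
    then obtain e where e: "e > 0" "\<And>z. z \<in> slit_ball e \<Longrightarrow> F z = 0"
      unfolding vanishes_near0_def by blast
    define e' where "e' = min e r"
    have e': "e' > 0" "e' \<le> r" "e' \<le> e" using e r by (auto simp: e'_def)
    have sub: "slit_ball e' \<subseteq> slit_ball r" "slit_ball e' \<subseteq> slit_ball e"
      using slit_ball_mono e' by auto
    have cont: "continuous_on (slit_ball e') G"
    proof (intro continuous_at_imp_continuous_on ballI)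
      fix x assume x: "x \<in> slit_ball e'"
      then have "x \<in> slit_ball r" using sub by blast
      from DERIV_isCont[OF dG[OF this]] show "isCont G x" .
    qed
    obtain c where c: "\<And>x. x \<in> slit_ball e' \<Longrightarrow> G x = c"
    proof (rule DERIV_zero_connected_constant[OF connected_slit_ball[OF e'(1)] open_slit_ball finite.emptyI cont])
      show "\<forall>x\<in>slit_ball e' - {}. (G has_field_derivative 0) (at x)"
      proof
        fix x assume x: "x \<in> slit_ball e' - {}"
        then have x1: "x \<in> slit_ball r" and x2: "x \<in> slit_ball e" using sub by auto
        show "(G has_field_derivative 0) (at x)" using dG[OF x1] e(2)[OF x2] by simp
      qed
    qed blast
    have "c = 0" by (rule Sform_const[OF SG nI' e'(1,2) c])
    then show "vanishes_near0 G" unfolding vanishes_near0_def using e' c by blast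
  next
    assume "vanishes_near0 G"
    then obtain e where e: "e > 0" "\<And>z. z \<in> slit_ball e \<Longrightarrow> G z = 0"
      unfolding vanishes_near0_def by blast
    define e' where "e' = min e r"
    have e': "e' > 0" "e' \<le> r" "e' \<le> e" using e r by (auto simp: e'_def)
    have sub: "slit_ball e' \<subseteq> slit_ball r" "slit_ball e' \<subseteq> slit_ball e"
      using slit_ball_mono e' by auto
    have "F z = 0" if z: "z \<in> slit_ball e'" for z
    proof -
      have G0: "G x = 0" if "x \<in> slit_ball e'" for x
        using e(2) subsetD[OF sub(2) that] by blast
      have d0: "(G has_field_derivative 0) (at z)"
        by (rule has_field_derivative_transform_within_open[OF DERIV_const open_slit_ball z])
           (use G0 in simp)
      have d1: "(G has_field_derivative F z) (at z)" using dG[OF subsetD[OF sub(1) z]] .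
      show ?thesis using DERIV_unique[OF d1 d0] .
    qed
    then show "vanishes_near0 F" unfolding vanishes_near0_def using e' by blast
  qed
qed

end
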